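(* Let $p>1$, $1/p+1/q=1$, let $\{(x_i,y_i)\}_{i=1}^n\subset\mathbb{R}^d\times\{\pm1\}$ be linearly separable with $\max_i\|x_i\|_q\le C$, and let $L(w)=\frac1n\sum_i\exp(-y_i\langle w,x_i\rangle)$ (exponential loss). Let $w_t$ be the iterates of $p$-GD with step size $\eta$ small enough that $\psi-\eta L$ is convex (at least locally at the iterates). Then $\|w_t\|_p\in\Theta(\log t)$; more precisely, $$\|w_t\|_p\ge\frac1C\left(\log t-p\log\log t\right)+O(1)\quad\text{as }t\to\infty,\qquad \limsup_{t\to\infty}\frac{\|w_t\|_p}{\log t}\le\hat\gamma_p^{-1}\frac{p}{p-1}.$$
   Context: $\psi(w)=\frac1p\|w\|_p^p$; $p$-GD is the iteration $\nabla\psi(w_{t+1})=\nabla\psi(w_t)-\eta\nabla L(w_t)$ from some initialization $w_0$. The max-margin direction is $\bar w^{\mathrm{mm}}_p=\arg\max_{\|w\|_p\le1}\min_i y_i\langle x_i,w\rangle$ and $\hat\gamma_p>0$ is the optimal value of this maximization (the max margin). *)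

theory Defs
  imports "HOL-Analysis.Analysis"
begin

definition pnorm :: "real \<Rightarrow> real^'d \<Rightarrow> real" where
  "pnorm p w = (\<Sum>j\<in>UNIV. \<bar>w $ j\<bar> powr p) powr (1 / p)"

definition psi :: "real \<Rightarrow> real^'d \<Rightarrow> real" where
  "psi p w = (1 / p) * (\<Sum>j\<in>UNIV. \<bar>w $ j\<bar> powr p)"

definition grad_psi :: "real \<Rightarrow> real^'d \<Rightarrow> real^'d" where
  "grad_psi p w = (\<chi> j. sgn (w $ j) * \<bar>w $ j\<bar> powr (p - 1))"

definition exp_loss :: "nat \<Rightarrow> (nat \<Rightarrow> real^'d) \<Rightarrow> (nat \<Rightarrow> real) \<Rightarrow> real^'d \<Rightarrow> real" where
  "exp_loss n x y w = (1 / real n) * (\<Sum>i<n. exp (- y i * (w \<bullet> x i)))"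

definition grad_exp_loss :: "nat \<Rightarrow> (nat \<Rightarrow> real^'d) \<Rightarrow> (nat \<Rightarrow> real) \<Rightarrow> real^'d \<Rightarrow> real^'d" where
  "grad_exp_loss n x y w = - ((1 / real n) *\<^sub>R (\<Sum>i<n. (exp (- y i * (w \<bullet> x i)) * y i) *\<^sub>R x i))"

definition max_margin :: "real \<Rightarrow> nat \<Rightarrow> (nat \<Rightarrow> real^'d) \<Rightarrow> (nat \<Rightarrow> real) \<Rightarrow> real" where
  "max_margin p n x y = (SUP w\<in>{w. pnorm p w \<le> 1}. (MIN i\<in>{..<n}. y i * (x i \<bullet> w)))"

end

theory Submission
  imports Defs
begin


lemma pnorm_nonneg: "pnorm p w \<ge> 0"
  unfolding pnorm_def by simp

lemma pnorm_powr: "p > 0 \<Longrightarrow> pnorm p w powr p = (\<Sum>j\<in>UNIV. \<bar>w $ j\<bar> powr p)"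
  unfolding pnorm_def
  by (simp add: powr_powr sum_nonneg)

lemma psi_pnorm: "p > 0 \<Longrightarrow> psi p w = pnorm p w powr p / p"
  by (simp add: psi_def pnorm_powr)

lemma pnorm_scale:
  assumes "p > 0" shows "pnorm p (c *\<^sub>R u) = \<bar>c\<bar> * pnorm p u"
proof -
  have "(\<Sum>j\<in>UNIV. \<bar>(c *\<^sub>R u) $ j\<bar> powr p) = \<bar>c\<bar> powr p * (\<Sum>j\<in>UNIV. \<bar>u $ j\<bar> powr p)"
    by (simp add: abs_mult powr_mult sum_distrib_left)
  then show ?thesis unfolding pnorm_def
    using assms by (simp add: powr_mult sum_nonneg powr_powr)
qed

lemma psi_scale:
  assumes "p > 0" "c \<ge> 0" shows "psi p (c *\<^sub>R u) = c powr p * psi p u"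
  using assms by (simp add: psi_pnorm pnorm_scale powr_mult pnorm_nonneg)

lemma sgn_pow_self:
  fixes b p :: real
  assumes p: "p > 1"
  shows "sgn b * \<bar>b\<bar> powr (p - 1) * b = \<bar>b\<bar> powr p"
proof (cases "b = 0")
  case True then show ?thesis using p by simp
next
  case False
  have "sgn b * b = \<bar>b\<bar>" by (simp add: sgn_mult_self_eq abs_sgn mult.commute)
  then have "sgn b * \<bar>b\<bar> powr (p - 1) * b = \<bar>b\<bar> powr (p - 1) * \<bar>b\<bar> powr 1"
    using False by (simp add: mult.commute mult.left_commute)
  also have "\<dots> = \<bar>b\<bar> powr ((p - 1) + 1)" by (simp only: powr_add)
  also have "\<dots> = \<bar>b\<bar> powr p" by simp
  finally show ?thesis .
qed

lemma young_sgn: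
  fixes a b p :: real
  assumes p: "p > 1"
  shows "\<bar>b\<bar> powr p / p + sgn b * \<bar>b\<bar> powr (p - 1) * (a - b) \<le> \<bar>a\<bar> powr p / p"
proof -
  define q where "q = p / (p - 1)"
  have q1: "q > 1" and pq: "1/p + 1/q = 1" using p by (auto simp: q_def field_simps)
  have Y: "\<bar>b\<bar> powr (p - 1) * \<bar>a\<bar> \<le> (\<bar>b\<bar> powr (p-1)) powr q / q + \<bar>a\<bar> powr p / p"
    using Youngs_inequality[OF q1 p _ _ _, of "\<bar>b\<bar> powr (p-1)" "\<bar>a\<bar>"] pq by (simp add: add.commute)
  have e1: "(\<bar>b\<bar> powr (p-1)) powr q = \<bar>b\<bar> powr p"
    using p by (simp add: powr_powr q_def)
  have e2: "sgn b * \<bar>b\<bar> powr (p - 1) * b = \<bar>b\<bar> powr p"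
  proof (cases "b = 0")
    case True then show ?thesis using p by simp
  next
    case False
    have "sgn b * b = \<bar>b\<bar>" by (simp add: sgn_mult_self_eq abs_sgn mult.commute)
    then have "sgn b * \<bar>b\<bar> powr (p - 1) * b = \<bar>b\<bar> powr (p - 1) * \<bar>b\<bar> powr 1"
      using False by (simp add: mult.commute mult.left_commute)
    also have "\<dots> = \<bar>b\<bar> powr ((p - 1) + 1)" by (simp only: powr_add)
    also have "\<dots> = \<bar>b\<bar> powr p" by simp
    finally show ?thesis .
  qed
  have e3: "sgn b * \<bar>b\<bar> powr (p - 1) * a \<le> \<bar>b\<bar> powr (p - 1) * \<bar>a\<bar>"
    by (cases "b > 0"; cases "b < 0"; cases "a \<ge> 0") (auto simp: mult_left_mono mult_le_0_iff)
  have "\<bar>b\<bar> powr p / q = \<bar>b\<bar> powr p * (1/q)" by simp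
  also have "\<dots> = \<bar>b\<bar> powr p * (1 - 1/p)" proof -
    have h: "1/q = 1 - 1/p" using pq by linarith
    show ?thesis by (simp only: h)
  qed
  finally have "\<bar>b\<bar> powr p / q = \<bar>b\<bar> powr p - \<bar>b\<bar> powr p / p" by (simp add: algebra_simps)
  then show ?thesis using Y e1 e2 e3 by (simp add: algebra_simps)
qed



lemma psi_tangent:
  assumes p: "p > 1"
  shows "psi p b + grad_psi p b \<bullet> (a - b) \<le> psi p a"
proof -
  have "psi p b + grad_psi p b \<bullet> (a - b) =
      (\<Sum>j\<in>UNIV. \<bar>b $ j\<bar> powr p / p + sgn (b $ j) * \<bar>b $ j\<bar> powr (p - 1) * (a $ j - b $ j))"
    by (simp add: psi_def grad_psi_def inner_vec_def sum.distrib sum_distrib_left sum_divide_distrib)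
  also have "\<dots> \<le> (\<Sum>j\<in>UNIV. \<bar>a $ j\<bar> powr p / p)"
    by (intro sum_mono young_sgn p)
  also have "\<dots> = psi p a" by (simp add: psi_def sum_divide_distrib)
  finally show ?thesis .
qed

lemma holder:
  fixes a b :: "real^'d"
  assumes p: "p > 1" and q: "q > 1" and pq: "1/p + 1/q = 1"
  shows "(\<Sum>j\<in>UNIV. \<bar>a $ j\<bar> * \<bar>b $ j\<bar>) \<le> pnorm p a * pnorm q b"
proof (cases "pnorm p a = 0 \<or> pnorm q b = 0")
  case True
  then consider "pnorm p a = 0" | "pnorm q b = 0" by blast
  then show ?thesis
  proof cases
    case 1
    then have "(\<Sum>j\<in>UNIV. \<bar>a $ j\<bar> powr p) = 0" using pnorm_powr[of p a] p by simp
    then have "\<forall>j\<in>UNIV. \<bar>a $ j\<bar> powr p = 0" by (subst sum_nonneg_eq_0_iff[symmetric]) auto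
    then have "\<forall>j. a $ j = 0" by simp
    then show ?thesis using 1 by simp
  next
    case 2
    then have "(\<Sum>j\<in>UNIV. \<bar>b $ j\<bar> powr q) = 0" using pnorm_powr[of q b] q by simp
    then have "\<forall>j\<in>UNIV. \<bar>b $ j\<bar> powr q = 0" by (subst sum_nonneg_eq_0_iff[symmetric]) auto
    then have "\<forall>j. b $ j = 0" by simp
    then show ?thesis using 2 by simp
  qed
next
  case False
  define A where "A = pnorm p a"
  define B where "B = pnorm q b"
  have A: "A > 0" using False pnorm_nonneg[of p a] by (simp add: A_def)
  have B: "B > 0" using False pnorm_nonneg[of q b] by (simp add: B_def)
  have "(\<Sum>j\<in>UNIV. (\<bar>a $ j\<bar> / A) * (\<bar>b $ j\<bar> / B)) \<le>
        (\<Sum>j\<in>UNIV. (\<bar>a $ j\<bar> / A) powr p / p + (\<bar>b $ j\<bar> / B) powr q / q)"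
    by (intro sum_mono Youngs_inequality p q pq) (use A B in auto)
  also have "\<dots> = (\<Sum>j\<in>UNIV. \<bar>a $ j\<bar> powr p) / A powr p / p + (\<Sum>j\<in>UNIV. \<bar>b $ j\<bar> powr q) / B powr q / q"
    using A B by (simp add: powr_divide sum.distrib sum_divide_distrib)
  also have "\<dots> = 1/p + 1/q"
  proof -
    have SA: "(\<Sum>j\<in>UNIV. \<bar>a $ j\<bar> powr p) = A powr p" using p by (simp add: A_def pnorm_powr)
    have SB: "(\<Sum>j\<in>UNIV. \<bar>b $ j\<bar> powr q) = B powr q" using q by (simp add: B_def pnorm_powr)
    show ?thesis using A B by (simp add: SA SB)
  qed
  finally have "(\<Sum>j\<in>UNIV. \<bar>a $ j\<bar> * \<bar>b $ j\<bar>) / (A * B) \<le> 1"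
    using pq by (simp add: sum_divide_distrib)
  then show ?thesis using A B by (simp add: A_def B_def divide_le_eq)
qed

lemma inner_holder:
  fixes a b :: "real^'d"
  assumes p: "p > 1" and q: "q > 1" and pq: "1/p + 1/q = 1"
  shows "\<bar>a \<bullet> b\<bar> \<le> pnorm p a * pnorm q b"
proof -
  have "\<bar>a \<bullet> b\<bar> \<le> (\<Sum>j\<in>UNIV. \<bar>a $ j\<bar> * \<bar>b $ j\<bar>)"
    unfolding inner_vec_def by (rule order_trans[OF sum_abs]) (simp add: abs_mult)
  also have "\<dots> \<le> pnorm p a * pnorm q b" by (rule holder[OF assms])
  finally show ?thesis .
qed

lemma grad_inner_self:
  assumes p: "p > 1" shows "grad_psi p b \<bullet> b = pnorm p b powr p"
proof -
  have "\<And>j. sgn (b $ j) * \<bar>b $ j\<bar> powr (p - 1) * b $ j = \<bar>b $ j\<bar> powr p"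
    using sgn_pow_self p by blast
  then show ?thesis using p by (simp add: grad_psi_def inner_vec_def pnorm_powr)
qed

lemma pnorm_grad:
  assumes p: "p > 1"
  shows "pnorm (p / (p - 1)) (grad_psi p b) = pnorm p b powr (p - 1)"
proof -
  have e: "\<And>j. \<bar>grad_psi p b $ j\<bar> powr (p / (p - 1)) = \<bar>b $ j\<bar> powr p"
    using p by (simp add: grad_psi_def abs_mult powr_powr)
  have "pnorm (p / (p - 1)) (grad_psi p b) = (\<Sum>j\<in>UNIV. \<bar>b $ j\<bar> powr p) powr ((p - 1) / p)"
    unfolding pnorm_def e by simp
  also have "\<dots> = (pnorm p b powr p) powr ((p - 1) / p)" using p by (simp add: pnorm_powr)
  also have "\<dots> = pnorm p b powr (p - 1)" using p by (simp add: powr_powr)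
  finally show ?thesis .
qed

lemma grad_inner_le:
  assumes p: "p > 1"
  shows "grad_psi p b \<bullet> a \<le> pnorm p b powr (p - 1) * pnorm p a"
proof -
  have q: "p / (p - 1) > 1" and pq: "1 / (p / (p - 1)) + 1 / p = 1" using p by (auto simp: field_simps)
  have "grad_psi p b \<bullet> a \<le> \<bar>grad_psi p b \<bullet> a\<bar>" by simp
  also have "\<dots> \<le> pnorm (p / (p - 1)) (grad_psi p b) * pnorm p a"
    by (rule inner_holder[OF q p pq])
  also have "\<dots> = pnorm p b powr (p - 1) * pnorm p a" using pnorm_grad[OF p, of b] by simp
  finally show ?thesis .
qed



lemma DERIV_abs_powr:
  fixes p :: real
  assumes p: "p > 1"
  shows "((\<lambda>x. \<bar>x\<bar> powr p) has_real_derivative (p * (sgn x * \<bar>x\<bar> powr (p - 1)))) (at x)"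
proof (cases x "0::real" rule: linorder_cases)
  case greater
  have d: "((\<lambda>x. x powr p) has_real_derivative (p * x powr (p - 1))) (at x)"
    using greater by (auto intro!: derivative_eq_intros)
  show ?thesis
  proof (rule has_field_derivative_transform_within_open[OF _ _ _, where S="{0<..}"])
    show "((\<lambda>x. x powr p) has_real_derivative (p * (sgn x * \<bar>x\<bar> powr (p - 1)))) (at x)"
      using d greater by simp
  qed (use greater in auto)
next
  case less
  have d: "((\<lambda>x. (-x) powr p) has_real_derivative (p * (-x) powr (p - 1) * (-1))) (at x)"
    using less by (auto intro!: derivative_eq_intros)
  show ?thesis
  proof (rule has_field_derivative_transform_within_open[OF _ _ _, where S="{..<0}"])
    show "((\<lambda>x. (-x) powr p) has_real_derivative (p * (sgn x * \<bar>x\<bar> powr (p - 1)))) (at x)"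
      using d less by simp
  qed (use less in auto)
next
  case equal
  have "((\<lambda>h. (\<bar>h\<bar> powr p - \<bar>0\<bar> powr p) / h) \<longlongrightarrow> 0) (at (0::real))"
  proof (rule tendsto_norm_zero_cancel)
    have a0: "((\<lambda>h::real. \<bar>h\<bar>) \<longlongrightarrow> 0) (at 0)"
      using tendsto_rabs[OF tendsto_ident_at[of "0::real" UNIV]] by simp
    have "((\<lambda>h::real. \<bar>h\<bar> powr (p - 1)) \<longlongrightarrow> 0 powr (p - 1)) (at 0)"
      using p by (intro tendsto_intros a0) auto
    then have l: "((\<lambda>h::real. \<bar>h\<bar> powr (p - 1)) \<longlongrightarrow> 0) (at 0)" using p by simp
    show "((\<lambda>h. norm ((\<bar>h\<bar> powr p - \<bar>0\<bar> powr p) / h)) \<longlongrightarrow> 0) (at (0::real))"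
    proof (rule Lim_transform_eventually[OF l])
      show "\<forall>\<^sub>F h in at (0::real). \<bar>h\<bar> powr (p - 1) = norm ((\<bar>h\<bar> powr p - \<bar>0\<bar> powr p) / h)"
      proof -
        have "\<forall>\<^sub>F h in at (0::real). h \<noteq> 0" by (simp add: eventually_at_filter)
        then show ?thesis
        proof (rule eventually_mono)
        fix h :: real assume "h \<noteq> 0"
        then show "\<bar>h\<bar> powr (p - 1) = norm ((\<bar>h\<bar> powr p - \<bar>0\<bar> powr p) / h)"
          using p by (simp add: powr_diff abs_divide)
        qed
      qed
    qed
  qed
  then show ?thesis using equal p
    by (simp add: has_field_derivative_iff)
qed

lemma psi_has_derivative:
  fixes w :: "real^'d"
  assumes p: "p > 1"
  shows "(psi p has_derivative (\<lambda>h. grad_psi p w \<bullet> h)) (at w)"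
proof -
  have c: "((\<lambda>v::real^'d. \<bar>v $ j\<bar> powr p) has_derivative
      (\<lambda>h. h $ j * (p * (sgn (w $ j) * \<bar>w $ j\<bar> powr (p - 1))))) (at w)" for j
  proof -
    have "((\<lambda>x. \<bar>x\<bar> powr p) has_derivative (\<lambda>h. h * (p * (sgn (w $ j) * \<bar>w $ j\<bar> powr (p - 1))))) (at (w $ j))"
      using DERIV_abs_powr[OF p, of "w $ j"] unfolding has_field_derivative_def
      by (simp add: mult.commute[of _ "p * _"])
    from has_derivative_compose[OF bounded_linear.has_derivative[OF bounded_linear_vec_nth[of j], OF has_derivative_ident] this]
    show ?thesis by simp
  qed
  have "((\<lambda>v::real^'d. (1/p) * (\<Sum>j\<in>UNIV. \<bar>v $ j\<bar> powr p)) has_derivative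
      (\<lambda>h. (1/p) * (\<Sum>j\<in>UNIV. h $ j * (p * (sgn (w $ j) * \<bar>w $ j\<bar> powr (p - 1)))))) (at w)"
    by (intro has_derivative_mult_right has_derivative_sum c)
  moreover have "(\<lambda>h. (1/p) * (\<Sum>j\<in>UNIV. h $ j * (p * (sgn (w $ j) * \<bar>w $ j\<bar> powr (p - 1)))))
     = (\<lambda>h. grad_psi p w \<bullet> h)"
    using p by (auto simp: grad_psi_def inner_vec_def sum_distrib_left intro!: sum.cong)
  ultimately show ?thesis unfolding psi_def[abs_def] by simp
qed

lemma loss_has_derivative:
  shows "(exp_loss n x y has_derivative (\<lambda>h. grad_exp_loss n x y w \<bullet> h)) (at w)"
proof -
  define c where "c = 1 / real n"
  have "((\<lambda>v. c * (\<Sum>i<n. exp (- y i * (v \<bullet> x i)))) has_derivative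
     (\<lambda>h. c * (\<Sum>i<n. exp (- y i * (w \<bullet> x i)) * (- y i * (h \<bullet> x i))))) (at w)"
    by (intro has_derivative_mult_right has_derivative_sum)
       (auto intro!: derivative_eq_intros simp: mult_ac)
  moreover have "(\<lambda>h. c * (\<Sum>i<n. exp (- y i * (w \<bullet> x i)) * (- y i * (h \<bullet> x i))))
     = (\<lambda>h. grad_exp_loss n x y w \<bullet> h)"
  proof
    fix h
    have "grad_exp_loss n x y w \<bullet> h = - (c * (\<Sum>i<n. (exp (- y i * (w \<bullet> x i)) * y i) * (x i \<bullet> h)))"
      by (simp add: grad_exp_loss_def c_def inner_sum_left)
    also have "\<dots> = c * (\<Sum>i<n. exp (- y i * (w \<bullet> x i)) * (- y i * (h \<bullet> x i)))"
      by (simp add: sum_negf inner_commute mult_ac)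
    finally show "c * (\<Sum>i<n. exp (- y i * (w \<bullet> x i)) * (- y i * (h \<bullet> x i))) = grad_exp_loss n x y w \<bullet> h" by simp
  qed
  ultimately show ?thesis unfolding exp_loss_def[abs_def] c_def by simp
qed

lemma convex_tangent:
  fixes f :: "real^'d \<Rightarrow> real"
  assumes cv: "convex_on (closed_segment a b) f"
    and d: "(f has_derivative f') (at a)"
  shows "f a + f' (b - a) \<le> f b"
proof -
  define g where "g s = f (a + s *\<^sub>R (b - a))" for s :: real
  have lin: "linear f'" using d has_derivative_linear by blast
  have "((\<lambda>s. a + s *\<^sub>R (b - a)) has_derivative (\<lambda>s. s *\<^sub>R (b - a))) (at 0)"
    by (auto intro!: derivative_eq_intros)
  from has_derivative_compose[OF this] d
  have "(g has_derivative (\<lambda>s. f' (s *\<^sub>R (b - a)))) (at 0)"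
    unfolding g_def by simp
  moreover have "(\<lambda>s. f' (s *\<^sub>R (b - a))) = (*) (f' (b - a))"
    using lin by (auto simp: linear.scaleR mult.commute)
  ultimately have "(g has_real_derivative f' (b - a)) (at 0)"
    by (simp add: has_field_derivative_def)
  then have lim: "((\<lambda>s. (g (0 + s) - g 0) / s) \<longlongrightarrow> f' (b - a)) (at 0)"
    by (simp add: has_field_derivative_iff)
  have lim': "((\<lambda>s. (g (0 + s) - g 0) / s) \<longlongrightarrow> f' (b - a)) (at_right 0)"
    by (rule filterlim_mono[OF lim]) (auto simp: at_le)
  have ev: "\<forall>\<^sub>F s in at_right (0::real). (g (0 + s) - g 0) / s \<le> f b - f a"
  proof -
    have "\<forall>\<^sub>F s in at_right (0::real). s \<in> {0<..<1}" by (rule eventually_at_right_real) simp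
    then show ?thesis
    proof (rule eventually_mono)
      fix s :: real assume s: "s \<in> {0<..<1}"
      have "g s = f ((1 - s) *\<^sub>R a + s *\<^sub>R b)"
        by (simp add: g_def algebra_simps)
      also have "\<dots> \<le> (1 - s) * f a + s * f b"
        using s by (intro convex_onD[OF cv]) auto
      finally have "g s - g 0 \<le> s * (f b - f a)" by (simp add: g_def algebra_simps)
      then show "(g (0 + s) - g 0) / s \<le> f b - f a" using s by (simp add: divide_le_eq mult.commute)
    qed
  qed
  show ?thesis
    using tendsto_le[OF trivial_limit_at_right_real tendsto_const lim' ev] by simp
qed



definition breg :: "real \<Rightarrow> real^'d \<Rightarrow> real^'d \<Rightarrow> real" where
  "breg p u v = psi p u - psi p v - grad_psi p v \<bullet> (u - v)"

lemma breg_nonneg: "p > 1 \<Longrightarrow> breg p u v \<ge> 0"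
  using psi_tangent[of p v u] by (simp add: breg_def)

lemma exp_loss_nonneg: "exp_loss n x y v \<ge> 0"
  by (simp add: exp_loss_def sum_nonneg)

lemma loss_convex:
  "exp_loss n x y a + grad_exp_loss n x y a \<bullet> (u - a) \<le> exp_loss n x y u"
proof -
  have e: "exp (- y i * (a \<bullet> x i)) + exp (- y i * (a \<bullet> x i)) * (- y i * ((u - a) \<bullet> x i))
      \<le> exp (- y i * (u \<bullet> x i))" for i
  proof -
    have "exp (- y i * (a \<bullet> x i)) * (1 + (- y i * ((u - a) \<bullet> x i)))
        \<le> exp (- y i * (a \<bullet> x i)) * exp (- y i * ((u - a) \<bullet> x i))"
      by (intro mult_left_mono exp_ge_add_one_self) simp
    also have "\<dots> = exp (- y i * (u \<bullet> x i))"
      by (simp add: mult_exp_exp inner_diff_left algebra_simps) 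
    finally show ?thesis by (simp add: algebra_simps)
  qed
  have "grad_exp_loss n x y a \<bullet> (u - a) =
     (1 / real n) * (\<Sum>i<n. exp (- y i * (a \<bullet> x i)) * (- y i * ((u - a) \<bullet> x i)))"
  proof -
    have "grad_exp_loss n x y a \<bullet> (u - a) = - ((1 / real n) * (\<Sum>i<n. (exp (- y i * (a \<bullet> x i)) * y i) * (x i \<bullet> (u - a))))"
      by (simp add: grad_exp_loss_def inner_sum_left)
    also have "\<dots> = (1 / real n) * (\<Sum>i<n. exp (- y i * (a \<bullet> x i)) * (- y i * ((u - a) \<bullet> x i)))"
      by (simp add: sum_negf inner_commute mult_ac)
    finally show ?thesis .
  qed
  then have "exp_loss n x y a + grad_exp_loss n x y a \<bullet> (u - a) =
     (1 / real n) * (\<Sum>i<n. exp (- y i * (a \<bullet> x i)) + exp (- y i * (a \<bullet> x i)) * (- y i * ((u - a) \<bullet> x i)))"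
    by (simp only: exp_loss_def sum.distrib distrib_left)
  also have "\<dots> \<le> (1 / real n) * (\<Sum>i<n. exp (- y i * (u \<bullet> x i)))"
    by (intro mult_left_mono sum_mono e) simp
  finally show ?thesis by (simp add: exp_loss_def)
qed

lemma one_step:
  fixes a b u :: "real^'d"
  assumes p: "p > 1" and eta: "\<eta> > 0"
    and cv: "convex_on (closed_segment a b) (\<lambda>v. psi p v - \<eta> * exp_loss n x y v)"
    and gd: "grad_psi p b = grad_psi p a - \<eta> *\<^sub>R grad_exp_loss n x y a"
  shows "exp_loss n x y b \<le> exp_loss n x y a"
    and "breg p u b \<le> breg p u a + \<eta> * (exp_loss n x y u - exp_loss n x y b)"
proof -
  let ?L = "exp_loss n x y" and ?G = "grad_exp_loss n x y a"
  have d: "((\<lambda>v. psi p v - \<eta> * exp_loss n x y v) has_derivative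
       (\<lambda>h. grad_psi p a \<bullet> h - \<eta> * (?G \<bullet> h))) (at a)"
    by (intro has_derivative_diff has_derivative_mult_right psi_has_derivative[OF p] loss_has_derivative)
  have tan: "psi p a - \<eta> * ?L a + (grad_psi p a \<bullet> (b - a) - \<eta> * (?G \<bullet> (b - a))) \<le> psi p b - \<eta> * ?L b"
    using convex_tangent[OF cv d] by simp
  have gb: "grad_psi p b \<bullet> v = grad_psi p a \<bullet> v - \<eta> * (?G \<bullet> v)" for v
    using gd by (simp add: inner_diff_left)
  have pt: "psi p b + grad_psi p b \<bullet> (a - b) \<le> psi p a" by (rule psi_tangent[OF p])
  have pt': "grad_psi p b \<bullet> (a - b) = - (grad_psi p b \<bullet> (b - a))"
    by (simp add: inner_diff_right)
  show "?L b \<le> ?L a"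
  proof -
    have "\<eta> * ?L b \<le> \<eta> * ?L a" using tan pt pt' gb[of "b - a"] by linarith
    then show ?thesis using eta by simp
  qed
  have lc: "?L a + ?G \<bullet> (u - a) \<le> ?L u" by (rule loss_convex)
  have i1: "?G \<bullet> (u - a) = ?G \<bullet> (u - b) + ?G \<bullet> (b - a)" 
    by (simp add: inner_diff_right)
  have i2: "grad_psi p a \<bullet> (u - a) = grad_psi p a \<bullet> (u - b) + grad_psi p a \<bullet> (b - a)" 
    by (simp add: inner_diff_right)
  have "\<eta> * (?G \<bullet> (u - a)) \<le> \<eta> * (?L u - ?L a)" using lc eta by (intro mult_left_mono) auto
  then show "breg p u b \<le> breg p u a + \<eta> * (?L u - ?L b)"
    unfolding breg_def using tan gb[of "u - b"] i1 i2 by (simp add: algebra_simps)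
qed



lemma telescope:
  fixes w :: "nat \<Rightarrow> real^'d"
  assumes p: "p > 1" and eta: "\<eta> > 0"
    and cv: "\<forall>t. convex_on (closed_segment (w t) (w (Suc t))) (\<lambda>v. psi p v - \<eta> * exp_loss n x y v)"
    and gd: "\<forall>t. grad_psi p (w (Suc t)) = grad_psi p (w t) - \<eta> *\<^sub>R grad_exp_loss n x y (w t)"
  shows "breg p u (w t) + \<eta> * real t * exp_loss n x y (w t) \<le> breg p u (w 0) + \<eta> * real t * exp_loss n x y u"
proof -
  let ?L = "exp_loss n x y"
  have dec: "?L (w (Suc s)) \<le> ?L (w s)" for s
    using one_step(1)[OF p eta cv[rule_format] gd[rule_format]] .
  have st: "breg p u (w (Suc s)) \<le> breg p u (w s) + \<eta> * (?L u - ?L (w (Suc s)))" for s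
    using one_step(2)[OF p eta cv[rule_format] gd[rule_format]] .
  have ind: "breg p u (w t) + \<eta> * (\<Sum>s<t. ?L (w (Suc s))) \<le> breg p u (w 0) + \<eta> * real t * ?L u" for t
  proof (induction t)
    case 0 then show ?case by simp
  next
    case (Suc t)
    have "\<eta> * (\<Sum>s<Suc t. ?L (w (Suc s))) = \<eta> * (\<Sum>s<t. ?L (w (Suc s))) + \<eta> * ?L (w (Suc t))"
      by (simp add: distrib_left)
    moreover have "\<eta> * real (Suc t) * ?L u = \<eta> * real t * ?L u + \<eta> * ?L u"
      by (simp add: distrib_left distrib_right)
    moreover have "\<eta> * (?L u - ?L (w (Suc t))) = \<eta> * ?L u - \<eta> * ?L (w (Suc t))"
      by (simp add: right_diff_distrib)
    ultimately show ?case using Suc.IH st[of t] by linarith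
  qed
  have "real t * ?L (w t) = (\<Sum>s<t. ?L (w t))" by simp
  also have "\<dots> \<le> (\<Sum>s<t. ?L (w (Suc s)))"
  proof (rule sum_mono)
    fix s assume "s \<in> {..<t}"
    then have "Suc s \<le> t" by simp
    then show "?L (w t) \<le> ?L (w (Suc s))"
      using lift_Suc_antimono_le[of "\<lambda>s. ?L (w s)", OF dec] by blast
  qed
  finally have "\<eta> * (real t * ?L (w t)) \<le> \<eta> * (\<Sum>s<t. ?L (w (Suc s)))"
    using eta by (intro mult_left_mono) auto
  moreover have "\<eta> * (real t * ?L (w t)) = \<eta> * real t * ?L (w t)" by (simp add: mult.assoc)
  ultimately show ?thesis using ind[of t] by linarith
qed

lemma eventually_ln_ge: "\<forall>\<^sub>F t in sequentially. ln (real t) \<ge> R"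
proof -
  have "\<forall>\<^sub>F t in sequentially. t \<ge> nat \<lceil>exp R\<rceil>" by (rule eventually_ge_at_top)
  then show ?thesis
  proof (rule eventually_mono)
    fix t assume "t \<ge> nat \<lceil>exp R\<rceil>"
    then have "real t \<ge> exp R" by linarith
    moreover have "exp R > 0" by simp
    ultimately have "real t > 0" by linarith
    with \<open>real t \<ge> exp R\<close> have "ln (real t) \<ge> ln (exp R)" by (subst ln_le_cancel_iff) auto
    then show "ln (real t) \<ge> R" by simp
  qed
qed

lemma pnorm_pos: assumes "p > 0" "v \<noteq> 0" shows "pnorm p v > 0"
proof -
  obtain j where j: "v $ j \<noteq> 0" using assms(2) by (auto simp: vec_eq_iff)
  have "(\<Sum>j\<in>UNIV. \<bar>v $ j\<bar> powr p) > 0"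
    by (rule sum_pos2[where i=j]) (use j in auto)
  then show ?thesis unfolding pnorm_def by simp
qed

lemma loss_lower:
  fixes v :: "real^'d"
  assumes p: "p > 1" and q: "q > 1" and pq: "1/p + 1/q = 1"
    and n: "n > 0" and lab: "\<forall>i<n. y i \<in> {-1, 1}" and bd: "\<forall>i<n. pnorm q (x i) \<le> C"
  shows "exp (- C * pnorm p v) / real n \<le> exp_loss n x y v"
proof -
  have "\<bar>v \<bullet> x 0\<bar> \<le> pnorm p v * pnorm q (x 0)" by (rule inner_holder[OF p q pq])
  also have "\<dots> \<le> pnorm p v * C" using bd n pnorm_nonneg[of p v] by (intro mult_left_mono) auto
  finally have h: "\<bar>v \<bullet> x 0\<bar> \<le> C * pnorm p v" by (simp add: mult.commute)
  have "- y 0 * (v \<bullet> x 0) \<ge> - \<bar>v \<bullet> x 0\<bar>" using lab n by auto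
  then have "exp (- C * pnorm p v) \<le> exp (- y 0 * (v \<bullet> x 0))" using h by simp
  also have "\<dots> \<le> (\<Sum>i<n. exp (- y i * (v \<bullet> x i)))"
    using n by (intro member_le_sum) auto
  finally have "exp (- C * pnorm p v) / real n \<le> (\<Sum>i<n. exp (- y i * (v \<bullet> x i))) / real n"
    by (rule divide_right_mono) simp
  then show ?thesis by (simp add: exp_loss_def)
qed

definition margin :: "nat \<Rightarrow> (nat \<Rightarrow> real^'d) \<Rightarrow> (nat \<Rightarrow> real) \<Rightarrow> real^'d \<Rightarrow> real" where
  "margin n x y m = (MIN i\<in>{..<n}. y i * (x i \<bullet> m))"

lemma loss_comparator:
  assumes n: "n > 0" and r: "r \<ge> 0"
  shows "exp_loss n x y (r *\<^sub>R m) \<le> exp (- r * margin n x y m)"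
proof -
  have "exp (- y i * ((r *\<^sub>R m) \<bullet> x i)) \<le> exp (- r * margin n x y m)" if "i < n" for i
  proof -
    have "margin n x y m \<le> y i * (x i \<bullet> m)" unfolding margin_def using that by (intro Min_le) auto
    then have "r * margin n x y m \<le> r * (y i * (x i \<bullet> m))" using r by (rule mult_left_mono)
    then show ?thesis by (simp add: inner_commute mult_ac)
  qed
  then have "(\<Sum>i<n. exp (- y i * ((r *\<^sub>R m) \<bullet> x i))) \<le> real n * exp (- r * margin n x y m)"
    using sum_bounded_above[of "{..<n}" "\<lambda>i. exp (- y i * ((r *\<^sub>R m) \<bullet> x i))"] by auto
  then have "(1 / real n) * (\<Sum>i<n. exp (- y i * ((r *\<^sub>R m) \<bullet> x i))) \<le> (1 / real n) * (real n * exp (- r * margin n x y m))"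
    by (rule mult_left_mono) simp
  then show ?thesis using n by (simp add: exp_loss_def)
qed

lemma breg0_bound:
  assumes p: "p > 1" and r: "r \<ge> 0" and m: "pnorm p m \<le> 1"
  shows "breg p (r *\<^sub>R m) w0 \<le> psi p (r *\<^sub>R m) + (grad_psi p w0 \<bullet> w0 - psi p w0) + r * \<bar>grad_psi p w0 \<bullet> m\<bar>"
proof -
  have "- (grad_psi p w0 \<bullet> (r *\<^sub>R m)) \<le> r * \<bar>grad_psi p w0 \<bullet> m\<bar>"
  proof -
    have "r * (- (grad_psi p w0 \<bullet> m)) \<le> r * \<bar>grad_psi p w0 \<bullet> m\<bar>" using r by (intro mult_left_mono) auto
    then show ?thesis by simp
  qed
  then show ?thesis by (simp add: breg_def inner_diff_right)
qed

lemma psi_comp_bound: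
  assumes p: "p > 1" and r: "r \<ge> 0" and m: "pnorm p m \<le> 1"
  shows "psi p (r *\<^sub>R m) \<le> r powr p / p"
proof -
  have "pnorm p m powr p \<le> 1 powr p" using m p pnorm_nonneg[of p m] by (intro powr_mono2) auto
  then have "psi p m \<le> 1 / p" using p by (simp add: psi_pnorm divide_right_mono)
  then have "r powr p * psi p m \<le> r powr p * (1 / p)" by (rule mult_left_mono) simp
  then show ?thesis using p r by (simp add: psi_scale)
qed



lemma lower_part:
  fixes w :: "nat \<Rightarrow> real^'d" and m :: "real^'d"
  assumes p: "p > 1" and q: "q > 1" and pq: "1/p + 1/q = 1"
    and n: "n > 0" and lab: "\<forall>i<n. y i \<in> {-1, 1}" and bd: "\<forall>i<n. pnorm q (x i) \<le> C"
    and eta: "\<eta> > 0" and C: "C > 0"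
    and m: "pnorm p m \<le> 1" and g1: "margin n x y m > 0"
    and tele: "\<And>u t. breg p u (w t) + \<eta> * real t * exp_loss n x y (w t) \<le> breg p u (w 0) + \<eta> * real t * exp_loss n x y u"
  shows "\<exists>K. \<forall>\<^sub>F t in sequentially.
            pnorm p (w t) \<ge> (1 / C) * (ln (real t) - p * ln (ln (real t))) + K"
proof -
  define \<gamma> where "\<gamma> = margin n x y m"
  define c0 where "c0 = grad_psi p (w 0) \<bullet> w 0 - psi p (w 0)"
  define c1 where "c1 = \<bar>grad_psi p (w 0) \<bullet> m\<bar>"
  define A where "A = 1/p + \<bar>c0\<bar> + c1 + \<eta>"
  have \<gamma>: "\<gamma> > 0" using g1 by (simp add: \<gamma>_def)
  have A: "A > 0" using p eta by (simp add: A_def c1_def add_pos_nonneg)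
  define K where "K = (p * ln \<gamma> + ln \<eta> - ln (real n) - ln A) / C"
  have "\<forall>\<^sub>F t in sequentially. ln (real t) \<ge> max \<gamma> 1" by (rule eventually_ln_ge)
  then have "\<forall>\<^sub>F t in sequentially. pnorm p (w t) \<ge> (1 / C) * (ln (real t) - p * ln (ln (real t))) + K"
  proof (rule eventually_mono)
    fix t :: nat assume lt: "ln (real t) \<ge> max \<gamma> 1"
    have tpos: "real t > 0"
    proof (cases "t = 0")
      case True then show ?thesis using lt by simp
    qed simp
    define r where "r = ln (real t) / \<gamma>"
    have r1: "r \<ge> 1" using lt \<gamma> by (simp add: r_def)
    have lnt: "ln (real t) = r * \<gamma>" using \<gamma> by (simp add: r_def)
    let ?u = "r *\<^sub>R m"
    have Lu: "exp_loss n x y ?u \<le> 1 / real t"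
    proof -
      have "exp_loss n x y ?u \<le> exp (- r * \<gamma>)" using loss_comparator[OF n, of r x y m] r1 by (simp add: \<gamma>_def)
      also have "\<dots> = exp (- ln (real t))" using lnt by simp
      also have "\<dots> = 1 / real t" using tpos by (simp add: exp_minus inverse_eq_divide)
      finally show ?thesis .
    qed
    have "\<eta> * real t * exp_loss n x y ?u \<le> \<eta> * real t * (1 / real t)"
      using Lu eta tpos by (intro mult_left_mono) auto
    then have etaLu: "\<eta> * real t * exp_loss n x y ?u \<le> \<eta>" using tpos by simp
    have b0: "breg p ?u (w 0) \<le> r powr p / p + c0 + r * c1"
      using breg0_bound[OF p _ m, of r "w 0"] psi_comp_bound[OF p _ m, of r] r1
      by (simp add: c0_def c1_def)
    have rp: "r \<le> r powr p" "1 \<le> r powr p"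
      using powr_mono[of 1 p r] r1 p ge_one_powr_ge_zero[of r p] by auto
    have "r powr p / p + c0 + r * c1 + \<eta> \<le> A * r powr p"
    proof -
      have "\<bar>c0\<bar> * 1 \<le> \<bar>c0\<bar> * r powr p" using rp(2) by (intro mult_left_mono) auto
      then have "c0 \<le> \<bar>c0\<bar> * r powr p" by linarith
      moreover have "r * c1 \<le> r powr p * c1" using rp(1) by (intro mult_right_mono) (auto simp: c1_def)
      moreover have "\<eta> \<le> \<eta> * r powr p" using rp eta by simp
      ultimately show ?thesis by (simp add: A_def algebra_simps)
    qed
    then have "\<eta> * real t * exp_loss n x y (w t) \<le> A * r powr p"
      using tele[of ?u t] breg_nonneg[OF p, of ?u "w t"] b0 etaLu by linarith
    then have Lw: "exp_loss n x y (w t) \<le> A * r powr p / (\<eta> * real t)"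
      using eta tpos by (simp add: le_divide_eq mult.commute)
    have "exp (- C * pnorm p (w t)) \<le> real n * (A * r powr p / (\<eta> * real t))"
    proof -
      have "exp (- C * pnorm p (w t)) \<le> real n * exp_loss n x y (w t)"
        using loss_lower[OF p q pq n lab bd, of "w t"] n by (simp add: divide_le_eq mult.commute)
      also have "\<dots> \<le> real n * (A * r powr p / (\<eta> * real t))"
        using Lw by (intro mult_left_mono) auto
      finally show ?thesis .
    qed
    then have "ln (exp (- C * pnorm p (w t))) \<le> ln (real n * (A * r powr p / (\<eta> * real t)))"
      using n A eta tpos r1 by (subst ln_le_cancel_iff) auto
    also have "\<dots> = ln (real n) + ln A + p * ln r - ln \<eta> - ln (real t)"
      using n A eta tpos r1 by (simp add: ln_mult ln_div)
    also have "ln r = ln (ln (real t)) - ln \<gamma>"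
      using \<gamma> lt by (simp add: r_def ln_div)
    finally have "- C * pnorm p (w t) \<le> ln (real n) + ln A + p * (ln (ln (real t)) - ln \<gamma>) - ln \<eta> - ln (real t)"
      by simp
    then have "C * ((1 / C) * (ln (real t) - p * ln (ln (real t))) + K) \<le> C * pnorm p (w t)"
    proof -
      have "C * ((1 / C) * (ln (real t) - p * ln (ln (real t))) + K) =
          (ln (real t) - p * ln (ln (real t))) + (p * ln \<gamma> + ln \<eta> - ln (real n) - ln A)"
        using C by (simp add: K_def field_simps)
      then show ?thesis using \<open>- C * pnorm p (w t) \<le> _\<close> by (simp add: algebra_simps)
    qed
    then show "(1 / C) * (ln (real t) - p * ln (ln (real t))) + K \<le> pnorm p (w t)"
      using C by simp
  qed
  then show ?thesis by blast
qed



lemma bound_step: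
  fixes w :: "nat \<Rightarrow> real^'d" and m :: "real^'d"
  assumes p: "p > 1" and n: "n > 0" and eta: "\<eta> > 0"
    and m: "pnorm p m \<le> 1" and g: "margin n x y m > \<gamma>" and \<gamma>: "\<gamma> > 0"
    and \<kappa>: "\<kappa> > p / (p - 1)"
    and tele: "\<And>u t. breg p u (w t) + \<eta> * real t * exp_loss n x y (w t) \<le> breg p u (w 0) + \<eta> * real t * exp_loss n x y u"
  shows "\<forall>\<^sub>F t in sequentially. pnorm p (w t) \<le> \<kappa> * (ln (real t) / \<gamma>)"
proof -
  define c0 where "c0 = grad_psi p (w 0) \<bullet> w 0 - psi p (w 0)"
  define c1 where "c1 = \<bar>grad_psi p (w 0) \<bullet> m\<bar>"
  define \<delta> where "\<delta> = (1 - 1/p) * \<kappa> - 1"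
  have "p / (p - 1) > 0" using p by simp
  then have kpos: "\<kappa> > 0" using \<kappa> by linarith
  have \<delta>: "\<delta> > 0"
  proof -
    have "(1 - 1/p) * (p / (p - 1)) = 1" using p by (simp add: field_simps)
    moreover have "(1 - 1/p) * (p / (p - 1)) < (1 - 1/p) * \<kappa>"
      using \<kappa> p by (intro mult_strict_left_mono) (auto simp: field_simps)
    ultimately show ?thesis unfolding \<delta>_def by linarith
  qed
  define M0 where "M0 = \<bar>c0\<bar> + \<eta> + c1 + 1"
  have M0: "M0 > 0" using eta by (simp add: M0_def c1_def add_pos_nonneg add_nonneg_pos)
  define M1 where "M1 = M0 / (\<kappa> powr (p - 1) * \<delta>)"
  have M1: "M1 > 0" using M0 kpos \<delta> by (simp add: M1_def)
  define R0 where "R0 = max 1 (M1 powr (1 / (p - 1)))"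
  have "\<forall>\<^sub>F t in sequentially. ln (real t) \<ge> R0 * \<gamma>" by (rule eventually_ln_ge)
  then show ?thesis
  proof (rule eventually_mono)
    fix t :: nat assume lt: "ln (real t) \<ge> R0 * \<gamma>"
    define r where "r = ln (real t) / \<gamma>"
    have rR: "r \<ge> R0" using lt \<gamma> by (simp add: r_def pos_le_divide_eq)
    have r1: "r \<ge> 1" using rR by (simp add: R0_def)
    have lnt: "ln (real t) = r * \<gamma>" using \<gamma> by (simp add: r_def)
    have tpos: "real t > 0"
    proof (cases "t = 0")
      case True then have "r = 0" by (simp add: r_def) 
      then show ?thesis using r1 by simp
    qed simp
    have rM: "r powr (p - 1) \<ge> M1"
    proof -
      have "M1 = (M1 powr (1 / (p - 1))) powr (p - 1)" using M1 p by (simp add: powr_powr)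
      also have "\<dots> \<le> r powr (p - 1)" using rR p by (intro powr_mono2) (auto simp: R0_def)
      finally show ?thesis .
    qed
    let ?u = "r *\<^sub>R m"
    have Lu: "exp_loss n x y ?u \<le> 1 / real t"
    proof -
      have "exp_loss n x y ?u \<le> exp (- r * margin n x y m)" using loss_comparator[OF n, of r x y m] r1 by simp
      also have "\<dots> \<le> exp (- r * \<gamma>)" using g r1 by (simp add: mult_left_mono)
      also have "\<dots> = exp (- ln (real t))" using lnt by simp
      also have "\<dots> = 1 / real t" using tpos by (simp add: exp_minus inverse_eq_divide)
      finally show ?thesis .
    qed
    have "\<eta> * real t * exp_loss n x y ?u \<le> \<eta> * real t * (1 / real t)"
      using Lu eta tpos by (intro mult_left_mono) auto
    then have etaLu: "\<eta> * real t * exp_loss n x y ?u \<le> \<eta>" using tpos by simp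
    have Lwt: "\<eta> * real t * exp_loss n x y (w t) \<ge> 0" using eta exp_loss_nonneg[of n x y "w t"] by simp
    have b0: "breg p ?u (w 0) \<le> psi p ?u + c0 + r * c1"
      using breg0_bound[OF p _ m, of r "w 0"] r1 by (simp add: c0_def c1_def)
    define N where "N = pnorm p (w t)"
    have N0: "N \<ge> 0" by (simp add: N_def pnorm_nonneg)
    have Nu: "pnorm p ?u \<le> r" using m r1 p by (simp add: pnorm_scale mult_left_le)
    have gu: "grad_psi p (w t) \<bullet> ?u \<le> N powr (p - 1) * r"
    proof -
      have "grad_psi p (w t) \<bullet> ?u \<le> N powr (p - 1) * pnorm p ?u"
        using grad_inner_le[OF p, of "w t" ?u] unfolding N_def .
      also have "\<dots> \<le> N powr (p - 1) * r" using Nu by (intro mult_left_mono) auto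
      finally show ?thesis .
    qed
    have bt: "breg p ?u (w t) = psi p ?u - N powr p / p - grad_psi p (w t) \<bullet> ?u + N powr p"
      using p by (simp add: breg_def inner_diff_right grad_inner_self psi_pnorm N_def)
    have main: "N powr p - N powr p / p - N powr (p - 1) * r \<le> c0 + r * c1 + \<eta>"
      using tele[of ?u t] b0 etaLu Lwt bt gu by linarith
    show "N \<le> \<kappa> * (ln (real t) / \<gamma>)"
    proof (rule ccontr)
      assume "\<not> ?thesis"
      then have Nbig: "N > \<kappa> * r" by (simp add: r_def)
      have "\<kappa> * r > 0" using kpos r1 by simp
      then have Npos: "N > 0" using Nbig by linarith
      have "N powr p = N powr ((p - 1) + 1)" by simp
      also have "\<dots> = N powr (p - 1) * N powr 1" by (rule powr_add)
      finally have Np: "N powr p = N powr (p - 1) * N" using Npos by simp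
      have lhs: "N powr p - N powr p / p - N powr (p - 1) * r = N powr (p - 1) * ((1 - 1/p) * N - r)"
        by (simp add: Np algebra_simps diff_divide_distrib)
      have "(1 - 1/p) * N - r \<ge> \<delta> * r"
      proof -
        have "(1 - 1/p) * (\<kappa> * r) \<le> (1 - 1/p) * N" using Nbig p by (intro mult_left_mono) auto
        then show ?thesis by (simp add: \<delta>_def algebra_simps)
      qed
      have Npow: "N powr (p - 1) \<ge> \<kappa> powr (p - 1) * r powr (p - 1)"
      proof -
        have "(\<kappa> * r) powr (p - 1) \<le> N powr (p - 1)" using Nbig kpos r1 p by (intro powr_mono2) auto
        then show ?thesis using kpos r1 by (simp add: powr_mult)
      qed
      have "\<kappa> powr (p - 1) * M1 * (\<delta> * r) \<le> \<kappa> powr (p - 1) * r powr (p - 1) * (\<delta> * r)"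
        using rM \<delta> r1 by (intro mult_right_mono mult_left_mono) auto
      also have "\<dots> \<le> N powr (p - 1) * (\<delta> * r)" using Npow \<delta> r1 by (intro mult_right_mono) auto
      also have "\<dots> \<le> N powr (p - 1) * ((1 - 1/p) * N - r)"
        using \<open>(1 - 1/p) * N - r \<ge> \<delta> * r\<close> by (intro mult_left_mono) auto
      finally have "M0 * r \<le> N powr p - N powr p / p - N powr (p - 1) * r"
        using kpos \<delta> by (simp add: lhs M1_def)
      moreover have "M0 * r > c0 + r * c1 + \<eta>"
      proof -
        have "M0 * r = \<bar>c0\<bar> * r + \<eta> * r + c1 * r + r" by (simp add: M0_def algebra_simps)
        moreover have "\<bar>c0\<bar> * r \<ge> \<bar>c0\<bar>" using r1 by (simp add: mult_le_cancel_left1)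
        moreover have "\<eta> * r \<ge> \<eta>" using r1 eta by simp
        ultimately show ?thesis using r1 by (simp add: mult.commute)
      qed
      ultimately show False using main by linarith
    qed
  qed
qed



lemma margin_le_C:
  assumes p: "p > 1" and q: "q > 1" and pq: "1/p + 1/q = 1"
    and n: "n > 0" and lab: "\<forall>i<n. y i \<in> {-1, 1}" and bd: "\<forall>i<n. pnorm q (x i) \<le> C"
    and v: "pnorm p v \<le> 1"
  shows "margin n x y v \<le> C"
proof -
  have "margin n x y v \<le> y 0 * (x 0 \<bullet> v)" unfolding margin_def using n by (intro Min_le) auto
  also have "\<dots> \<le> \<bar>v \<bullet> x 0\<bar>" using lab n by (auto simp: inner_commute)
  also have "\<dots> \<le> pnorm p v * pnorm q (x 0)" by (rule inner_holder[OF p q pq])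
  also have "\<dots> \<le> 1 * C" using v bd n pnorm_nonneg[of p v] pnorm_nonneg[of q "x 0"]
    by (intro mult_mono) auto
  finally show ?thesis by simp
qed

theorem lemma5:
  fixes p q C \<eta> :: real and n :: nat
    and x :: "nat \<Rightarrow> real^'d" and y :: "nat \<Rightarrow> real"
    and w :: "nat \<Rightarrow> real^'d"
  assumes p_gt: "p > 1"
    and pq: "1 / p + 1 / q = 1"
    and n_pos: "n > 0"
    and labels: "\<forall>i<n. y i \<in> {-1, 1}"
    and separable: "\<exists>u. \<forall>i<n. y i * (u \<bullet> x i) > 0"
    and bounded: "\<forall>i<n. pnorm q (x i) \<le> C"
    and eta_pos: "\<eta> > 0"
    and local_convex: "\<forall>t. convex_on (closed_segment (w t) (w (Suc t)))
                               (\<lambda>v. psi p v - \<eta> * exp_loss n x y v)"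
    and pGD: "\<forall>t. grad_psi p (w (Suc t)) = grad_psi p (w t) - \<eta> *\<^sub>R grad_exp_loss n x y (w t)"
  shows "(\<exists>K. \<forall>\<^sub>F t in sequentially.
            pnorm p (w t) \<ge> (1 / C) * (ln (real t) - p * ln (ln (real t))) + K)
      \<and> limsup (\<lambda>t. ereal (pnorm p (w t) / ln (real t)))
          \<le> ereal ((1 / max_margin p n x y) * (p / (p - 1)))"
proof -
  have q: "q > 1"
  proof -
    have "1 / q = 1 - 1 / p" using pq by linarith
    moreover have "1 / p > 0" "1 / p < 1" using p_gt by auto
    ultimately have "1 / q > 0" "1 / q < 1" by linarith+
    then show ?thesis by (smt (verit) divide_less_eq_1 zero_less_divide_1_iff)
  qed
  have tele: "\<And>u t. breg p u (w t) + \<eta> * real t * exp_loss n x y (w t) \<le> breg p u (w 0) + \<eta> * real t * exp_loss n x y u"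
    by (rule telescope[OF p_gt eta_pos local_convex pGD])
  obtain u0 where u0: "\<forall>i<n. y i * (u0 \<bullet> x i) > 0" using separable by blast
  have x0: "x 0 \<noteq> 0" using u0 n_pos by (metis inner_zero_right mult_zero_right less_irrefl)
  have C: "C > 0" using pnorm_pos[of q "x 0"] x0 q bounded n_pos by force
  have u0nz: "u0 \<noteq> 0" using u0 n_pos by (metis inner_zero_left mult_zero_right less_irrefl)
  define m1 where "m1 = (1 / pnorm p u0) *\<^sub>R u0"
  have Nu0: "pnorm p u0 > 0" using pnorm_pos[of p u0] u0nz p_gt by simp
  have m1: "pnorm p m1 \<le> 1" using Nu0 p_gt by (simp add: m1_def pnorm_scale)
  have g1: "margin n x y m1 > 0"
    unfolding margin_def using n_pos u0 Nu0
    by (subst Min_gr_iff) (auto simp: m1_def inner_commute)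
  have lower: "\<exists>K. \<forall>\<^sub>F t in sequentially.
            pnorm p (w t) \<ge> (1 / C) * (ln (real t) - p * ln (ln (real t))) + K"
    by (rule lower_part[OF p_gt q pq n_pos labels bounded eta_pos C m1 g1 tele])
  define S where "S = {v::real^'d. pnorm p v \<le> 1}"
  have mm: "max_margin p n x y = (SUP v\<in>S. margin n x y v)"
    by (simp add: max_margin_def margin_def S_def)
  have bdd: "bdd_above (margin n x y ` S)"
    by (rule bdd_aboveI2[where M=C]) (use margin_le_C[OF p_gt q pq n_pos labels bounded] in \<open>auto simp: S_def\<close>)
  have Sne: "S \<noteq> {}" using m1 by (auto simp: S_def)
  define \<gamma> where "\<gamma> = max_margin p n x y"
  have \<gamma>: "\<gamma> > 0"
  proof -
    have "margin n x y m1 \<le> \<gamma>" unfolding \<gamma>_def mm by (rule cSUP_upper[OF _ bdd]) (use m1 in \<open>simp add: S_def\<close>)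
    then show ?thesis using g1 by linarith
  qed
  define T where "T = (1 / \<gamma>) * (p / (p - 1))"
  have Tpos: "T > 0" using \<gamma> p_gt by (simp add: T_def)
  have upper: "limsup (\<lambda>t. ereal (pnorm p (w t) / ln (real t))) \<le> ereal T"
  proof (rule dense_ge)
    fix z assume z: "ereal T < z"
    show "limsup (\<lambda>t. ereal (pnorm p (w t) / ln (real t))) \<le> z"
    proof (cases z)
      case PInf then show ?thesis by simp
    next
      case MInf then show ?thesis using z by simp
    next
      case (real B)
      have BT: "B > T" using z real by simp
      have B: "B > 0" using BT Tpos by linarith
      define \<gamma>' where "\<gamma>' = (\<gamma> + p / ((p - 1) * B)) / 2"
      have lt: "p / ((p - 1) * B) < \<gamma>"
      proof -
        have "(1 / \<gamma>) * (p / (p - 1)) < B" using BT by (simp add: T_def)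
        then have "(p / (p - 1)) / \<gamma> < B" by (simp add: mult.commute)
        then have "p / (p - 1) < B * \<gamma>" using pos_divide_less_eq[OF \<gamma>] by blast
        then show ?thesis using B p_gt by (simp add: field_simps)
      qed
      have pos: "p / ((p - 1) * B) > 0" using p_gt B by simp
      obtain a where a: "a = p / ((p - 1) * B)" by blast
      have ga: "\<gamma>' = (\<gamma> + a) / 2" using a by (simp add: \<gamma>'_def)
      have g'1a: "\<gamma>' < \<gamma>" using lt pos unfolding ga a[symmetric] by (simp add: field_simps)
      have g'1b: "\<gamma>' > 0" using lt pos unfolding ga a[symmetric] by (simp add: field_simps)
      have g'1c: "\<gamma>' > p / ((p - 1) * B)" using lt pos unfolding ga a[symmetric] by (simp add: field_simps)
      note g'1 = g'1a g'1b g'1c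
      obtain m where mS: "m \<in> S" and mg: "\<gamma>' < margin n x y m"
        using less_cSUP_iff[OF Sne bdd, of \<gamma>'] g'1 mm by (auto simp: \<gamma>_def)
      have \<kappa>: "B * \<gamma>' > p / (p - 1)"
      proof -
        have "B * (p / ((p - 1) * B)) < B * \<gamma>'" using g'1 B by (intro mult_strict_left_mono) auto
        moreover have "B * (p / ((p - 1) * B)) = p / (p - 1)" using B by simp
        ultimately show ?thesis by linarith
      qed
      have ev1: "\<forall>\<^sub>F t in sequentially. pnorm p (w t) \<le> (B * \<gamma>') * (ln (real t) / \<gamma>')"
        using bound_step[OF p_gt n_pos eta_pos _ mg g'1(2) \<kappa> tele] mS by (simp add: S_def)
      have ev2: "\<forall>\<^sub>F t in sequentially. ln (real t) \<ge> 1" by (rule eventually_ln_ge)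
      have "\<forall>\<^sub>F t in sequentially. ereal (pnorm p (w t) / ln (real t)) \<le> ereal B"
        using ev1 ev2
      proof eventually_elim
        case (elim t)
        then have "pnorm p (w t) \<le> B * ln (real t)" using g'1 by simp
        then show ?case using elim by (simp add: divide_le_eq)
      qed
      then show ?thesis unfolding real by (rule Limsup_bounded)
    qed
  qed
  show ?thesis using lower upper by (simp add: T_def \<gamma>_def)
qed

end
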